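(* Let $G_0$ be a finite nonabelian simple group, identified with its inner automorphism group in $\mathrm{Aut}(G_0)$. Suppose that $\mathrm{Reg}_H(H\cdot G_0,5)\ge 5$ for every maximal solvable subgroup $H$ of $\mathrm{Aut}(G_0)$. Then for every $G$ with $G_0\le G\le\mathrm{Aut}(G_0)$ and every solvable subgroup $S$ of $G$, we have $\mathrm{Reg}_S(G,5)\ge 5$.
   Context: For a finite group $G$ and subgroup $H$, $G$ acts by right multiplication on the set $\Omega_H$ of right cosets of $H$, with kernel $H_G=\bigcap_{g\in G}H^g$; $\mathrm{Reg}_H(G,k)$ is the number of regular (free) orbits of $G/H_G$ on $\Omega_H^k$ under the componentwise action $(\alpha_1,\dots,\alpha_k)g=(\alpha_1g,\dots,\alpha_kg)$. A maximal solvable subgroup is a solvable subgroup not properly contained in a solvable subgroup. $H\cdot G_0$ is the subgroup generated by $H$ and $G_0$. *)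

theory Defs
  imports "HOL-Algebra.Algebra"
begin

definition core :: "('a, 'b) monoid_scheme \<Rightarrow> 'a set \<Rightarrow> 'a set" where
  "core G H = (\<Inter>g\<in>carrier G. (inv\<^bsub>G\<^esub> g <#\<^bsub>G\<^esub> H) #>\<^bsub>G\<^esub> g)"

definition tuple_act :: "('a, 'b) monoid_scheme \<Rightarrow> nat \<Rightarrow> (nat \<Rightarrow> 'a set) \<Rightarrow> 'a \<Rightarrow> (nat \<Rightarrow> 'a set)" where
  "tuple_act G k w g = (\<lambda>i\<in>{..<k}. w i #>\<^bsub>G\<^esub> g)"

definition tuples :: "('a, 'b) monoid_scheme \<Rightarrow> 'a set \<Rightarrow> nat \<Rightarrow> (nat \<Rightarrow> 'a set) set" where
  "tuples G H k = {..<k} \<rightarrow>\<^sub>E rcosets\<^bsub>G\<^esub> H"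

definition tuple_orbit :: "('a, 'b) monoid_scheme \<Rightarrow> nat \<Rightarrow> (nat \<Rightarrow> 'a set) \<Rightarrow> (nat \<Rightarrow> 'a set) set" where
  "tuple_orbit G k w = tuple_act G k w ` carrier G"

definition tuple_stab :: "('a, 'b) monoid_scheme \<Rightarrow> nat \<Rightarrow> (nat \<Rightarrow> 'a set) \<Rightarrow> 'a set" where
  "tuple_stab G k w = {g \<in> carrier G. tuple_act G k w g = w}"

text \<open>Reg_H(G,k): number of orbits of G on Omega_H^k that are regular for G/H_G,
  i.e. orbits whose point stabilisers in G equal the kernel H_G.\<close>
definition Reg :: "('a, 'b) monoid_scheme \<Rightarrow> 'a set \<Rightarrow> nat \<Rightarrow> nat" where
  "Reg G H k = card {Orb. \<exists>w\<in>tuples G H k. Orb = tuple_orbit G k w \<and> tuple_stab G k w = core G H}"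

definition Inn :: "('a, 'b) monoid_scheme \<Rightarrow> ('a \<Rightarrow> 'a) set" where
  "Inn G0 = {(\<lambda>x\<in>carrier G0. g \<otimes>\<^bsub>G0\<^esub> x \<otimes>\<^bsub>G0\<^esub> inv\<^bsub>G0\<^esub> g) | g. g \<in> carrier G0}"

definition solvable_subgroup :: "('a, 'b) monoid_scheme \<Rightarrow> 'a set \<Rightarrow> bool" where
  "solvable_subgroup A H \<longleftrightarrow> subgroup H A \<and> solvable (A\<lparr>carrier := H\<rparr>)"

definition maximal_solvable_subgroup :: "('a, 'b) monoid_scheme \<Rightarrow> 'a set \<Rightarrow> bool" where
  "maximal_solvable_subgroup A H \<longleftrightarrow> solvable_subgroup A H \<and>
     (\<forall>K. solvable_subgroup A K \<and> H \<subseteq> K \<longrightarrow> K = H)"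

end

theory Submission
  imports Defs
begin

definition conjf :: "('a, 'b) monoid_scheme \<Rightarrow> 'a \<Rightarrow> ('a \<Rightarrow> 'a)" where
  "conjf G g = (\<lambda>x\<in>carrier G. g \<otimes>\<^bsub>G\<^esub> x \<otimes>\<^bsub>G\<^esub> inv\<^bsub>G\<^esub> g)"

context group begin

lemma Inn_eq: "Inn G = conjf G ` carrier G"
  unfolding Inn_def conjf_def by auto

lemma A_carrier: "carrier (AutoGroup G) = auto G"
  by (simp add: AutoGroup_def)

lemma A_one: "\<one>\<^bsub>AutoGroup G\<^esub> = (\<lambda>x\<in>carrier G. x)"
  by (simp add: AutoGroup_def BijGroup_def)

lemma A_mult: "a \<in> auto G \<Longrightarrow> b \<in> auto G \<Longrightarrow> a \<otimes>\<^bsub>AutoGroup G\<^esub> b = compose (carrier G) a b"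
  by (simp add: AutoGroup_def BijGroup_def auto_def)

lemma A_group: "group (AutoGroup G)" by (rule AutoGroup)

lemma conjf_auto: assumes g: "g \<in> carrier G" shows "conjf G g \<in> auto G"
proof -
  have hom: "conjf G g \<in> hom G G"
    by (rule homI) (auto simp: conjf_def g m_assoc inv_solve_left)
  have inj: "inj_on (conjf G g) (carrier G)"
    by (rule inj_onI) (auto simp: conjf_def g)
  have "conjf G g ` carrier G = carrier G"
  proof
    show "conjf G g ` carrier G \<subseteq> carrier G" using hom by (auto simp: hom_def)
    show "carrier G \<subseteq> conjf G g ` carrier G"
    proof
      fix y assume y: "y \<in> carrier G"
      have "conjf G g (inv g \<otimes> y \<otimes> g) = y" using g y
        by (simp add: conjf_def m_assoc) (metis g y inv_closed m_assoc r_inv l_one)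
      moreover have "inv g \<otimes> y \<otimes> g \<in> carrier G" using g y by simp
      ultimately show "y \<in> conjf G g ` carrier G" by (metis image_eqI)
    qed
  qed
  thus ?thesis using hom inj unfolding auto_def Bij_def bij_betw_def
    by (simp add: conjf_def)
qed

lemma finite_auto: "finite (carrier G) \<Longrightarrow> finite (auto G)"
proof -
  assume f: "finite (carrier G)"
  have "auto G \<subseteq> carrier G \<rightarrow>\<^sub>E carrier G"
    by (auto simp: auto_def Bij_def bij_betw_def extensional_def hom_def)
  thus ?thesis using f by (meson finite_PiE finite_subset)
qed

lemma conjf_hom: "group_hom G (AutoGroup G) (conjf G)"
proof -
  interpret A: group "AutoGroup G" by (rule AutoGroup)
  show ?thesis
  proof (unfold_locales, rule homI)
    fix x assume "x \<in> carrier G" thus "conjf G x \<in> carrier (AutoGroup G)"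
      by (simp add: A_carrier conjf_auto)
  next
    fix x y assume x: "x \<in> carrier G" and y: "y \<in> carrier G"
    have e: "conjf G x \<otimes>\<^bsub>AutoGroup G\<^esub> conjf G y = compose (carrier G) (conjf G x) (conjf G y)"
      by (simp add: A_mult conjf_auto x y)
    show "conjf G (x \<otimes> y) = conjf G x \<otimes>\<^bsub>AutoGroup G\<^esub> conjf G y"
      unfolding e using x y by (auto simp: compose_def conjf_def m_assoc inv_mult_group)
  qed
qed

lemma aut_conj: assumes a: "a \<in> auto G" and g: "g \<in> carrier G"
  shows "a \<otimes>\<^bsub>AutoGroup G\<^esub> conjf G g \<otimes>\<^bsub>AutoGroup G\<^esub> inv\<^bsub>AutoGroup G\<^esub> a = conjf G (a g)"
proof -
  interpret A: group "AutoGroup G" by (rule AutoGroup)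
  have ahom: "a \<in> hom G G" and aext: "a \<in> extensional (carrier G)" using a by (auto simp: auto_def Bij_def)
  have ag: "a g \<in> carrier G" using ahom g by (auto simp: hom_def)
  have "a \<otimes>\<^bsub>AutoGroup G\<^esub> conjf G g = conjf G (a g) \<otimes>\<^bsub>AutoGroup G\<^esub> a"
  proof -
    have "compose (carrier G) a (conjf G g) = compose (carrier G) (conjf G (a g)) a"
    proof (rule ext)
      fix x show "compose (carrier G) a (conjf G g) x = compose (carrier G) (conjf G (a g)) a x"
      proof (cases "x \<in> carrier G")
        case True
        have ax: "a x \<in> carrier G" using ahom True by (auto simp: hom_def)
        have "a (g \<otimes> x \<otimes> inv g) = a g \<otimes> a x \<otimes> inv (a g)"
        proof -
          interpret ah: group_hom G G a using ahom by (simp add: group_hom_def group_hom_axioms_def is_group)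
          show ?thesis using g True by simp
        qed
        thus ?thesis using True ax by (simp add: compose_def conjf_def)
      qed (simp add: compose_def)
    qed
    thus ?thesis using a g ag by (simp add: A_mult conjf_auto)
  qed
  moreover have c: "conjf G (a g) \<in> carrier (AutoGroup G)" "a \<in> carrier (AutoGroup G)"
    using a ag by (simp_all add: A_carrier conjf_auto)
  ultimately show ?thesis
    by (simp add: A.m_assoc)
qed

end


lemma (in simple_group) solvable_imp_comm:
  assumes "solvable G" shows "comm_group G"
proof -
  have nD: "derived G (carrier G) \<lhd> G" by (rule derived_is_normal[OF normal_self])
  hence "derived G (carrier G) = carrier G \<or> derived G (carrier G) = {\<one>}"
    using no_real_normal_subgroup by blast
  thus ?thesis
  proof
    assume e: "derived G (carrier G) = carrier G"
    have "\<And>n. (derived G ^^ n) (carrier G) = carrier G"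
      subgoal for n by (induct n) (simp_all add: e)
      done
    moreover obtain n where "(derived G ^^ n) (carrier G) = {\<one>}"
      using solvable_imp_trivial_derived_seq assms unfolding solvable_def by blast
    ultimately show ?thesis using simple_not_triv by simp
  next
    assume e: "derived G (carrier G) = {\<one>}"
    show ?thesis
    proof (rule group_comm_groupI)
      fix x y assume x: "x \<in> carrier G" and y: "y \<in> carrier G"
      have "x \<otimes> y \<otimes> inv x \<otimes> inv y \<in> derived_set G (carrier G)" using x y by blast
      hence "x \<otimes> y \<otimes> inv x \<otimes> inv y \<in> derived G (carrier G)"
        unfolding derived_def by (rule generate.incl)
      hence "x \<otimes> y \<otimes> inv x \<otimes> inv y = \<one>" using e by simp
      hence "x \<otimes> y \<otimes> inv x = y" using x y
        by (metis inv_closed inv_inv inv_solve_right m_closed one_closed l_one)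
      hence "x \<otimes> y = y \<otimes> x" using x y
        by (metis inv_closed inv_solve_right m_closed)
      thus "x \<otimes> y = y \<otimes> x" .
    qed
  qed
qed



lemma (in group) canc1 [simp]: "x \<in> carrier G \<Longrightarrow> h \<in> carrier G \<Longrightarrow> x \<otimes> (inv x \<otimes> h) = h"
  by (metis inv_closed m_assoc r_inv l_one)
lemma (in group) canc2 [simp]: "x \<in> carrier G \<Longrightarrow> h \<in> carrier G \<Longrightarrow> inv x \<otimes> (x \<otimes> h) = h"
  by (metis inv_closed m_assoc l_inv l_one)
lemma (in group) core_mem:
  assumes L: "subgroup L G" and Hs: "subgroup Hs G" and HL: "Hs \<subseteq> L"
  shows "n \<in> core (G\<lparr>carrier := L\<rparr>) Hs \<longleftrightarrow> n \<in> L \<and> (\<forall>x\<in>L. x \<otimes> n \<otimes> inv x \<in> Hs)"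
proof -
  have Lc: "L \<subseteq> carrier G" using L subgroup.subset by blast
  have Hc: "Hs \<subseteq> carrier G" using Hs subgroup.subset by blast
  have one: "\<one> \<in> L" using L subgroup.one_closed by blast
  have memx: "n \<in> (inv x <# Hs) #> x \<longleftrightarrow> n \<in> carrier G \<and> x \<otimes> n \<otimes> inv x \<in> Hs" if x: "x \<in> carrier G" for x
  proof
    assume "n \<in> (inv x <# Hs) #> x"
    then obtain h where h: "h \<in> Hs" "n = inv x \<otimes> h \<otimes> x"
      unfolding l_coset_def r_coset_def by auto
    have hc: "h \<in> carrier G" using h Hc by blast
    have "x \<otimes> n \<otimes> inv x = h" using h(2) x hc by (simp add: m_assoc)
    thus "n \<in> carrier G \<and> x \<otimes> n \<otimes> inv x \<in> Hs" using h x hc by simp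
  next
    assume a: "n \<in> carrier G \<and> x \<otimes> n \<otimes> inv x \<in> Hs"
    have "n = inv x \<otimes> (x \<otimes> n \<otimes> inv x) \<otimes> x" using a x by (simp add: m_assoc)
    thus "n \<in> (inv x <# Hs) #> x" using a
      unfolding l_coset_def r_coset_def by blast
  qed
  have "n \<in> core (G\<lparr>carrier := L\<rparr>) Hs \<longleftrightarrow> (\<forall>x\<in>L. n \<in> (inv x <# Hs) #> x)"
    unfolding core_def using L by (auto simp: m_inv_consistent)
  also have "\<dots> \<longleftrightarrow> (\<forall>x\<in>L. n \<in> carrier G \<and> x \<otimes> n \<otimes> inv x \<in> Hs)"
    using memx Lc by blast
  also have "\<dots> \<longleftrightarrow> n \<in> L \<and> (\<forall>x\<in>L. x \<otimes> n \<otimes> inv x \<in> Hs)"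
  proof
    assume a: "\<forall>x\<in>L. n \<in> carrier G \<and> x \<otimes> n \<otimes> inv x \<in> Hs"
    hence "n \<in> Hs" using one by force
    thus "n \<in> L \<and> (\<forall>x\<in>L. x \<otimes> n \<otimes> inv x \<in> Hs)" using a HL by blast
  qed (use Lc in blast)
  finally show ?thesis .
qed



lemma (in group) core_props:
  assumes L: "subgroup L G" and Hs: "subgroup Hs G" and HL: "Hs \<subseteq> L"
  defines "N \<equiv> core (G\<lparr>carrier := L\<rparr>) Hs"
  shows "subgroup N G" "\<And>y n. y \<in> L \<Longrightarrow> n \<in> N \<Longrightarrow> y \<otimes> n \<otimes> inv y \<in> N" "N \<subseteq> Hs"
proof -
  note cm = core_mem[OF L Hs HL, folded N_def]
  have D1: "n \<in> L" if "n \<in> N" for n using that cm by blast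
  have D2: "x \<otimes> n \<otimes> inv x \<in> Hs" if "n \<in> N" "x \<in> L" for n x using that cm by blast
  have I: "n \<in> N" if "n \<in> L" "\<And>x. x \<in> L \<Longrightarrow> x \<otimes> n \<otimes> inv x \<in> Hs" for n using that cm by blast
  have Lc: "L \<subseteq> carrier G" using L subgroup.subset by blast
  have one: "\<one> \<in> L" using L subgroup.one_closed by blast
  have Dc: "n \<in> carrier G" if "n \<in> N" for n using D1[OF that] Lc by blast
  show "N \<subseteq> Hs"
  proof
    fix n assume n: "n \<in> N"
    have "\<one> \<otimes> n \<otimes> inv \<one> \<in> Hs" by (rule D2[OF n one])
    thus "n \<in> Hs" using Dc[OF n] by simp
  qed
  show "subgroup N G"
  proof
    show "N \<subseteq> carrier G" using Dc by blast
  next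
    fix a b assume a: "a \<in> N" and b: "b \<in> N"
    have ac: "a \<in> carrier G" and bc: "b \<in> carrier G" using Dc a b by auto
    show "a \<otimes> b \<in> N"
    proof (rule I)
      show "a \<otimes> b \<in> L" by (rule subgroup.m_closed[OF L D1[OF a] D1[OF b]])
      fix x assume x: "x \<in> L"
      have xc: "x \<in> carrier G" using x Lc by blast
      have "x \<otimes> (a \<otimes> b) \<otimes> inv x = (x \<otimes> a \<otimes> inv x) \<otimes> (x \<otimes> b \<otimes> inv x)"
        using xc ac bc by (simp add: m_assoc)
      moreover have "x \<otimes> a \<otimes> inv x \<in> Hs" "x \<otimes> b \<otimes> inv x \<in> Hs" using D2 a b x by auto
      ultimately show "x \<otimes> (a \<otimes> b) \<otimes> inv x \<in> Hs" using subgroup.m_closed[OF Hs] by simp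
    qed
  next
    show "\<one> \<in> N"
    proof (rule I[OF one])
      fix x assume "x \<in> L" hence "x \<in> carrier G" using Lc by blast
      thus "x \<otimes> \<one> \<otimes> inv x \<in> Hs" using subgroup.one_closed[OF Hs] by simp
    qed
  next
    fix a assume a: "a \<in> N"
    have ac: "a \<in> carrier G" using Dc a by auto
    show "inv a \<in> N"
    proof (rule I)
      show "inv a \<in> L" by (rule subgroup.m_inv_closed[OF L D1[OF a]])
      fix x assume x: "x \<in> L"
      have xc: "x \<in> carrier G" using x Lc by blast
      have "x \<otimes> inv a \<otimes> inv x = inv (x \<otimes> a \<otimes> inv x)"
        using xc ac by (simp add: m_assoc inv_mult_group)
      moreover have "x \<otimes> a \<otimes> inv x \<in> Hs" using D2 a x by auto
      ultimately show "x \<otimes> inv a \<otimes> inv x \<in> Hs" using subgroup.m_inv_closed[OF Hs] by simp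
    qed
  qed
  fix y n assume y: "y \<in> L" and n: "n \<in> N"
  have yc: "y \<in> carrier G" and nc: "n \<in> carrier G" using y Lc Dc n by auto
  show "y \<otimes> n \<otimes> inv y \<in> N"
  proof (rule I)
    show "y \<otimes> n \<otimes> inv y \<in> L" by (intro subgroup.m_closed[OF L] subgroup.m_inv_closed[OF L] y D1[OF n])
    fix x assume x: "x \<in> L"
    have xc: "x \<in> carrier G" using x Lc by blast
    have "x \<otimes> (y \<otimes> n \<otimes> inv y) \<otimes> inv x = (x \<otimes> y) \<otimes> n \<otimes> inv (x \<otimes> y)"
      using xc yc nc by (simp add: m_assoc inv_mult_group)
    moreover have "x \<otimes> y \<in> L" by (rule subgroup.m_closed[OF L x y])
    ultimately show "x \<otimes> (y \<otimes> n \<otimes> inv y) \<otimes> inv x \<in> Hs" using D2[OF n] by simp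
  qed
qed



lemma (in simple_group) core_trivial:
  assumes nc: "\<not> comm_group G" and L: "subgroup L (AutoGroup G)" and HL: "Hs \<subseteq> L"
    and Hs: "subgroup Hs (AutoGroup G)" and sol: "solvable ((AutoGroup G)\<lparr>carrier := Hs\<rparr>)"
    and IL: "Inn G \<subseteq> L"
  shows "core ((AutoGroup G)\<lparr>carrier := L\<rparr>) Hs \<subseteq> {\<one>\<^bsub>AutoGroup G\<^esub>}"
proof -
  interpret A: group "AutoGroup G" by (rule AutoGroup)
  interpret c: group_hom G "AutoGroup G" "conjf G" by (rule conjf_hom)
  define N where "N = core ((AutoGroup G)\<lparr>carrier := L\<rparr>) Hs"
  have Nsub: "subgroup N (AutoGroup G)" and NH: "N \<subseteq> Hs"
    and Nconj: "\<And>y n. y \<in> L \<Longrightarrow> n \<in> N \<Longrightarrow> y \<otimes>\<^bsub>AutoGroup G\<^esub> n \<otimes>\<^bsub>AutoGroup G\<^esub> inv\<^bsub>AutoGroup G\<^esub> y \<in> N"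
    using A.core_props[OF L Hs HL] unfolding N_def by auto
  have cL: "conjf G g \<in> L" if "g \<in> carrier G" for g using IL that Inn_eq by blast
  have Lc: "L \<subseteq> auto G" using L subgroup.subset A_carrier by blast
  define M where "M = {g \<in> carrier G. conjf G g \<in> N}"
  have Msub: "subgroup M G"
  proof
    show "M \<subseteq> carrier G" unfolding M_def by blast
  next
    fix g h assume "g \<in> M" "h \<in> M"
    hence g: "g \<in> carrier G" "conjf G g \<in> N" and h: "h \<in> carrier G" "conjf G h \<in> N" unfolding M_def by auto
    have "conjf G (g \<otimes> h) \<in> N" using g h by (simp add: subgroup.m_closed[OF Nsub])
    thus "g \<otimes> h \<in> M" unfolding M_def using g h by simp
  next
    show "\<one> \<in> M" unfolding M_def using subgroup.one_closed[OF Nsub] by simp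
  next
    fix g assume "g \<in> M"
    hence g: "g \<in> carrier G" "conjf G g \<in> N" unfolding M_def by auto
    have "conjf G (inv g) \<in> N" using g by (simp add: subgroup.m_inv_closed[OF Nsub])
    thus "inv g \<in> M" unfolding M_def using g by simp
  qed
  have "M \<lhd> G"
  proof (rule normal_invI[OF Msub])
    fix x h assume x: "x \<in> carrier G" and "h \<in> M"
    hence h: "h \<in> carrier G" "conjf G h \<in> N" unfolding M_def by auto
    have "conjf G (x \<otimes> h \<otimes> inv x) = conjf G x \<otimes>\<^bsub>AutoGroup G\<^esub> conjf G h \<otimes>\<^bsub>AutoGroup G\<^esub> inv\<^bsub>AutoGroup G\<^esub> conjf G x"
      using x h by simp
    also have "\<dots> \<in> N" by (rule Nconj[OF cL[OF x] h(2)])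
    finally show "x \<otimes> h \<otimes> inv x \<in> M" unfolding M_def using x h by simp
  qed
  hence "M = carrier G \<or> M = {\<one>}" using no_real_normal_subgroup by blast
  thus ?thesis
  proof
    assume MG: "M = carrier G"
    have cH: "conjf G g \<in> Hs" if "g \<in> carrier G" for g using MG that NH unfolding M_def by blast
    have gh: "group_hom G ((AutoGroup G)\<lparr>carrier := Hs\<rparr>) (conjf G)"
    proof (intro group_hom.intro group_hom_axioms.intro)
      show "group G" by (rule is_group)
      show "group ((AutoGroup G)\<lparr>carrier := Hs\<rparr>)" by (rule A.subgroup_imp_group[OF Hs])
      show "conjf G \<in> hom G ((AutoGroup G)\<lparr>carrier := Hs\<rparr>)"
        by (rule homI) (simp_all add: cH)
    qed
    have "kernel G (AutoGroup G) (conjf G) \<lhd> G" by (rule c.normal_kernel)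
    hence "kernel G (AutoGroup G) (conjf G) = carrier G \<or> kernel G (AutoGroup G) (conjf G) = {\<one>}"
      using no_real_normal_subgroup by blast
    moreover have "kernel G (AutoGroup G) (conjf G) \<noteq> carrier G"
    proof
      assume K: "kernel G (AutoGroup G) (conjf G) = carrier G"
      have "comm_group G"
      proof (rule group_comm_groupI)
        fix x y assume x: "x \<in> carrier G" and y: "y \<in> carrier G"
        have "conjf G x = (\<lambda>z\<in>carrier G. z)" using K x unfolding kernel_def by (auto simp: A_one)
        hence "conjf G x y = y" using y by simp
        hence "x \<otimes> y \<otimes> inv x = y" using y by (simp add: conjf_def)
        hence "x \<otimes> y \<otimes> inv x \<otimes> x = y \<otimes> x" by simp
        thus "x \<otimes> y = y \<otimes> x" using x y by (simp add: m_assoc)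
      qed
      thus False using nc by blast
    qed
    ultimately have "inj_on (conjf G) (carrier G)" using c.trivial_ker_imp_inj by blast
    hence "solvable G" using group_hom.inj_hom_imp_solvable[OF gh _ sol] by blast
    hence "comm_group G" by (rule solvable_imp_comm)
    thus ?thesis using nc by blast
  next
    assume M1: "M = {\<one>}"
    show ?thesis
    proof
      fix a assume aN: "a \<in> core ((AutoGroup G)\<lparr>carrier := L\<rparr>) Hs"
      hence aN: "a \<in> N" unfolding N_def .
      have aA: "a \<in> auto G" using aN Nsub subgroup.subset A_carrier by blast
      have ahom: "a \<in> hom G G" and aext: "a \<in> extensional (carrier G)" using aA by (auto simp: auto_def Bij_def)
      have fix_pt: "a g = g" if g: "g \<in> carrier G" for g
      proof -
        have ag: "a g \<in> carrier G" using ahom g by (auto simp: hom_def)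
        have cg: "conjf G g \<in> carrier (AutoGroup G)" using g by (simp add: A_carrier conjf_auto)
        have ac: "a \<in> carrier (AutoGroup G)" using aA by (simp add: A_carrier)
        have "conjf G (a g \<otimes> inv g) = conjf G (a g) \<otimes>\<^bsub>AutoGroup G\<^esub> inv\<^bsub>AutoGroup G\<^esub> conjf G g"
          using ag g by simp
        also have "\<dots> = a \<otimes>\<^bsub>AutoGroup G\<^esub> conjf G g \<otimes>\<^bsub>AutoGroup G\<^esub> inv\<^bsub>AutoGroup G\<^esub> a \<otimes>\<^bsub>AutoGroup G\<^esub> inv\<^bsub>AutoGroup G\<^esub> conjf G g"
          using aut_conj[OF aA g] by simp
        also have "\<dots> = a \<otimes>\<^bsub>AutoGroup G\<^esub> (conjf G g \<otimes>\<^bsub>AutoGroup G\<^esub> inv\<^bsub>AutoGroup G\<^esub> a \<otimes>\<^bsub>AutoGroup G\<^esub> inv\<^bsub>AutoGroup G\<^esub> conjf G g)"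
          using cg ac by (simp add: A.m_assoc)
        also have "\<dots> \<in> N"
          using subgroup.m_closed[OF Nsub aN Nconj[OF cL[OF g] subgroup.m_inv_closed[OF Nsub aN]]] .
        finally have "a g \<otimes> inv g \<in> M" unfolding M_def using ag g by simp
        hence "a g \<otimes> inv g = \<one>" using M1 by blast
        moreover have "a g = (a g \<otimes> inv g) \<otimes> g" using ag g by (simp add: m_assoc)
        ultimately show "a g = g" using g by simp
      qed
      have "a = (\<lambda>x\<in>carrier G. x)"
      proof
        fix x show "a x = (\<lambda>x\<in>carrier G. x) x"
          using fix_pt aext by (cases "x \<in> carrier G") (auto simp: extensional_def)
      qed
      thus "a \<in> {\<one>\<^bsub>AutoGroup G\<^esub>}" by (simp add: A_one)
    qed
  qed
qed



context group begin

lemma rc_eq: assumes S: "subgroup S G" and a: "a \<in> carrier G" and b: "b \<in> carrier G"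
  and e: "S #> a = S #> b" shows "\<exists>s\<in>S. a = s \<otimes> b"
proof -
  have "a \<in> S #> b" using rcos_self[OF a S] e by simp
  thus ?thesis unfolding r_coset_def by blast
qed

lemma rc_mult: assumes H: "subgroup H G" and s: "s \<in> H" and b: "b \<in> carrier G"
  shows "H #> (s \<otimes> b) = H #> b"
proof -
  have sc: "s \<in> carrier G" by (rule subgroup.mem_carrier[OF H s])
  have "H #> (s \<otimes> b) = (H #> s) #> b" using coset_mult_assoc[OF subgroup.subset[OF H] sc b] by simp
  also have "\<dots> = H #> b" using coset_join2[OF sc H s] by simp
  finally show ?thesis .
qed

lemma rc_up: assumes S: "subgroup S G" and H: "subgroup H G" and SH: "S \<subseteq> H"
  and a: "a \<in> carrier G" and b: "b \<in> carrier G" and e: "S #> a = S #> b"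
  shows "H #> a = H #> b"
proof -
  obtain s where s: "s \<in> S" "a = s \<otimes> b" using rc_eq[OF S a b e] by blast
  show ?thesis using rc_mult[OF H _ b, of s] s SH by blast
qed

lemma ta_upd: "tuple_act (G\<lparr>carrier := Y\<rparr>) k w g = (\<lambda>i\<in>{..<k}. w i #> g)"
  unfolding tuple_act_def by simp

lemma orb_upd: "tuple_orbit (G\<lparr>carrier := Y\<rparr>) k w = (\<lambda>g. (\<lambda>i\<in>{..<k}. w i #> g)) ` Y"
  unfolding tuple_orbit_def by (simp add: ta_upd)

lemma stab_upd: "tuple_stab (G\<lparr>carrier := Y\<rparr>) k w = {g \<in> Y. (\<lambda>i\<in>{..<k}. w i #> g) = w}"
  unfolding tuple_stab_def by (simp add: ta_upd)

lemma tuples_upd: "tuples (G\<lparr>carrier := Y\<rparr>) H k = {..<k} \<rightarrow>\<^sub>E {H #> x | x. x \<in> Y}"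
  unfolding tuples_def RCOSETS_def by auto

lemma orb_shift:
  assumes Y: "subgroup Y G" and x: "x \<in> Y" and wc: "\<And>i. i < k \<Longrightarrow> w i \<subseteq> carrier G"
  shows "tuple_orbit (G\<lparr>carrier := Y\<rparr>) k (\<lambda>i\<in>{..<k}. w i #> x) = tuple_orbit (G\<lparr>carrier := Y\<rparr>) k w"
proof -
  have Xc: "Y \<subseteq> carrier G" by (rule subgroup.subset[OF Y])
  have xc: "x \<in> carrier G" using x Xc by blast
  have eq: "(\<lambda>i\<in>{..<k}. (\<lambda>i\<in>{..<k}. w i #> x) i #> g) = (\<lambda>i\<in>{..<k}. w i #> (x \<otimes> g))"
    if g: "g \<in> carrier G" for g
    by (rule restrict_ext) (simp add: coset_mult_assoc[OF wc xc g])
  show ?thesis unfolding orb_upd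
  proof
    show "(\<lambda>g. \<lambda>i\<in>{..<k}. (\<lambda>i\<in>{..<k}. w i #> x) i #> g) ` Y \<subseteq> (\<lambda>g. \<lambda>i\<in>{..<k}. w i #> g) ` Y"
    proof
      fix v assume "v \<in> (\<lambda>g. \<lambda>i\<in>{..<k}. (\<lambda>i\<in>{..<k}. w i #> x) i #> g) ` Y"
      then obtain g where g: "g \<in> Y" "v = (\<lambda>i\<in>{..<k}. (\<lambda>i\<in>{..<k}. w i #> x) i #> g)" by blast
      have gc: "g \<in> carrier G" using g Xc by blast
      have "x \<otimes> g \<in> Y" by (rule subgroup.m_closed[OF Y x g(1)])
      thus "v \<in> (\<lambda>g. \<lambda>i\<in>{..<k}. w i #> g) ` Y" using g(2) eq[OF gc] by blast
    qed
  next
    show "(\<lambda>g. \<lambda>i\<in>{..<k}. w i #> g) ` Y \<subseteq> (\<lambda>g. \<lambda>i\<in>{..<k}. (\<lambda>i\<in>{..<k}. w i #> x) i #> g) ` Y"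
    proof
      fix v assume "v \<in> (\<lambda>g. \<lambda>i\<in>{..<k}. w i #> g) ` Y"
      then obtain z where z: "z \<in> Y" "v = (\<lambda>i\<in>{..<k}. w i #> z)" by blast
      have ix: "inv x \<in> Y" using Y x by (rule subgroup.m_inv_closed)
      have g: "inv x \<otimes> z \<in> Y" by (rule subgroup.m_closed[OF Y ix z(1)])
      have gc: "inv x \<otimes> z \<in> carrier G" using g Xc by blast
      have zc: "z \<in> carrier G" using z Xc by blast
      have "x \<otimes> (inv x \<otimes> z) = z" using xc zc by simp
      hence "v = (\<lambda>i\<in>{..<k}. (\<lambda>i\<in>{..<k}. w i #> x) i #> (inv x \<otimes> z))" using z(2) eq[OF gc] by simp
      thus "v \<in> (\<lambda>g. \<lambda>i\<in>{..<k}. (\<lambda>i\<in>{..<k}. w i #> x) i #> g) ` Y" using g by blast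
    qed
  qed
qed

end


lemma (in group) reg_mono:
  assumes fin: "finite (carrier G)"
    and Gs: "subgroup Gs G" and Ls: "subgroup Ls G" and S: "subgroup S G" and H: "subgroup H G"
    and SG: "S \<subseteq> Gs" and SH: "S \<subseteq> H" and HL: "H \<subseteq> Ls" and KG: "K \<subseteq> Gs" and KL: "K \<subseteq> Ls"
    and dec: "\<And>x. x \<in> Ls \<Longrightarrow> \<exists>h\<in>H. \<exists>y\<in>K. x = h \<otimes> y"
    and coreL: "core (G\<lparr>carrier := Ls\<rparr>) H \<subseteq> {\<one>}"
    and k: "0 < k"
  shows "Reg (G\<lparr>carrier := Ls\<rparr>) H k \<le> Reg (G\<lparr>carrier := Gs\<rparr>) S k"
proof -
  have Lc: "Ls \<subseteq> carrier G" by (rule subgroup.subset[OF Ls])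
  have Gc: "Gs \<subseteq> carrier G" by (rule subgroup.subset[OF Gs])
  have Hc: "H \<subseteq> carrier G" by (rule subgroup.subset[OF H])
  have Sc: "S \<subseteq> carrier G" by (rule subgroup.subset[OF S])
  have Kc: "K \<subseteq> carrier G" using KL Lc by blast
  define GL where "GL = G\<lparr>carrier := Ls\<rparr>"
  define GG where "GG = G\<lparr>carrier := Gs\<rparr>"
  define RL where "RL = {Orb. \<exists>w\<in>tuples GL H k. Orb = tuple_orbit GL k w \<and> tuple_stab GL k w = core GL H}"
  define RG where "RG = {Orb. \<exists>w\<in>tuples GG S k. Orb = tuple_orbit GG k w \<and> tuple_stab GG k w = core GG S}"
  define P where "P Q kk \<longleftrightarrow> (\<forall>i<k. kk i \<in> K) \<and> Q = tuple_orbit GL k (\<lambda>i\<in>{..<k}. H #> kk i)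
      \<and> tuple_stab GL k (\<lambda>i\<in>{..<k}. H #> kk i) = core GL H" for Q kk
  have ex: "\<exists>kk. P Q kk" if Q: "Q \<in> RL" for Q
  proof -
    obtain w where w: "w \<in> tuples GL H k" "Q = tuple_orbit GL k w" "tuple_stab GL k w = core GL H"
      using Q unfolding RL_def by blast
    have "\<forall>i\<in>{..<k}. \<exists>y. y \<in> K \<and> w i = H #> y"
    proof
      fix i assume i: "i \<in> {..<k}"
      have "w i \<in> {H #> x | x. x \<in> Ls}" using w(1) i unfolding GL_def tuples_upd by (auto simp: PiE_iff)
      then obtain x where x: "x \<in> Ls" "w i = H #> x" by blast
      obtain h y where hy: "h \<in> H" "y \<in> K" "x = h \<otimes> y" using dec[OF x(1)] by blast
      have yc: "y \<in> carrier G" using hy Kc by blast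
      have "w i = H #> y" using x(2) hy(3) rc_mult[OF H hy(1) yc] by simp
      thus "\<exists>y. y \<in> K \<and> w i = H #> y" using hy by blast
    qed
    then obtain kk where kk: "\<forall>i\<in>{..<k}. kk i \<in> K \<and> w i = H #> kk i" by (metis bchoice)
    have "w = (\<lambda>i\<in>{..<k}. H #> kk i)"
    proof
      fix i show "w i = (\<lambda>i\<in>{..<k}. H #> kk i) i"
      proof (cases "i < k")
        case True thus ?thesis using kk by simp
      next
        case False
        have "w \<in> extensional {..<k}" using w(1) unfolding tuples_def by (simp add: PiE_iff)
        thus ?thesis using False by (simp add: extensional_def)
      qed
    qed
    thus ?thesis unfolding P_def using w kk by auto
  qed
  define kk where "kk Q = (SOME kk. P Q kk)" for Q
  have kkP: "P Q (kk Q)" if "Q \<in> RL" for Q unfolding kk_def using ex[OF that] by (rule someI_ex)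
  have kkK: "kk Q i \<in> K" if "Q \<in> RL" "i < k" for Q i using kkP[OF that(1)] that(2) unfolding P_def by blast
  have kkc: "kk Q i \<in> carrier G" if "Q \<in> RL" "i < k" for Q i using kkK[OF that] Kc by blast
  define wL where "wL Q = (\<lambda>i\<in>{..<k}. H #> kk Q i)" for Q
  define vS where "vS Q = (\<lambda>i\<in>{..<k}. S #> kk Q i)" for Q
  define f where "f Q = tuple_orbit GG k (vS Q)" for Q
  have wL_orb: "Q = tuple_orbit GL k (wL Q)" and wL_stab: "tuple_stab GL k (wL Q) = core GL H"
    if "Q \<in> RL" for Q using kkP[OF that] unfolding P_def wL_def by auto
  have one_core: "\<one> \<in> core GG S"
    unfolding GG_def core_mem[OF Gs S SG]
    using subgroup.one_closed[OF Gs] subgroup.one_closed[OF S] Gc by auto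
  have f_in: "f Q \<in> RG" if Q: "Q \<in> RL" for Q
  proof -
    have vt: "vS Q \<in> tuples GG S k"
      unfolding GG_def tuples_upd vS_def using kkK[OF Q] KG by auto
    have "tuple_stab GG k (vS Q) = core GG S"
    proof
      show "tuple_stab GG k (vS Q) \<subseteq> core GG S"
      proof
        fix c assume "c \<in> tuple_stab GG k (vS Q)"
        hence c: "c \<in> Gs" and ce: "(\<lambda>i\<in>{..<k}. vS Q i #> c) = vS Q"
          unfolding GG_def stab_upd by auto
        have cc: "c \<in> carrier G" using c Gc by blast
        have Si: "S #> (kk Q i \<otimes> c) = S #> kk Q i" if i: "i < k" for i
        proof -
          have "(\<lambda>i\<in>{..<k}. vS Q i #> c) i = vS Q i" using ce by simp
          hence "S #> kk Q i #> c = S #> kk Q i" using i unfolding vS_def by simp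
          thus ?thesis using coset_mult_assoc[OF Sc kkc[OF Q i] cc] by simp
        qed
        have Hi: "H #> kk Q i #> c = H #> kk Q i" if i: "i < k" for i
          using rc_up[OF S H SH _ kkc[OF Q i] Si[OF i]] coset_mult_assoc[OF Hc kkc[OF Q i] cc]
            kkc[OF Q i] cc by simp
        obtain s where s: "s \<in> S" "kk Q 0 \<otimes> c = s \<otimes> kk Q 0"
          using rc_eq[OF S _ kkc[OF Q k] Si[OF k]] kkc[OF Q k] cc by auto
        have sL: "s \<in> Ls" using s SH HL by blast
        have k0L: "kk Q 0 \<in> Ls" using kkK[OF Q k] KL by blast
        have sc: "s \<in> carrier G" using s Sc by blast
        have "c = inv (kk Q 0) \<otimes> (kk Q 0 \<otimes> c)" using cc kkc[OF Q k] by simp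
        also have "\<dots> = inv (kk Q 0) \<otimes> (s \<otimes> kk Q 0)" using s by simp
        finally have "c \<in> Ls" using subgroup.m_closed[OF Ls subgroup.m_inv_closed[OF Ls k0L] subgroup.m_closed[OF Ls sL k0L]] by simp
        moreover have "(\<lambda>i\<in>{..<k}. wL Q i #> c) = wL Q"
          unfolding wL_def by (rule restrict_ext) (simp add: Hi)
        ultimately have "c \<in> tuple_stab GL k (wL Q)" unfolding GL_def stab_upd by simp
        hence "c = \<one>" using wL_stab[OF Q] coreL unfolding GL_def by blast
        thus "c \<in> core GG S" using one_core by simp
      qed
    next
      show "core GG S \<subseteq> tuple_stab GG k (vS Q)"
      proof
        fix c assume "c \<in> core GG S"
        hence c: "c \<in> Gs" and cS: "\<And>x. x \<in> Gs \<Longrightarrow> x \<otimes> c \<otimes> inv x \<in> S"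
          unfolding GG_def core_mem[OF Gs S SG] by auto
        have cc: "c \<in> carrier G" using c Gc by blast
        have "S #> kk Q i #> c = S #> kk Q i" if i: "i < k" for i
        proof -
          have ki: "kk Q i \<in> carrier G" by (rule kkc[OF Q i])
          have sS: "kk Q i \<otimes> c \<otimes> inv (kk Q i) \<in> S" using cS kkK[OF Q i] KG by blast
          have "kk Q i \<otimes> c = (kk Q i \<otimes> c \<otimes> inv (kk Q i)) \<otimes> kk Q i" using ki cc by (simp add: m_assoc)
          hence "S #> (kk Q i \<otimes> c) = S #> kk Q i" using rc_mult[OF S sS ki] by simp
          thus ?thesis using coset_mult_assoc[OF Sc ki cc] by simp
        qed
        hence "(\<lambda>i\<in>{..<k}. vS Q i #> c) = vS Q" unfolding vS_def by (intro restrict_ext) simp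
        thus "c \<in> tuple_stab GG k (vS Q)" unfolding GG_def stab_upd using c by simp
      qed
    qed
    thus ?thesis unfolding RG_def f_def using vt by blast
  qed
  have inj: "inj_on f RL"
  proof
    fix O1 O2 assume O1: "O1 \<in> RL" and O2: "O2 \<in> RL" and fe: "f O1 = f O2"
    have e1: "(\<lambda>i\<in>{..<k}. vS O1 i #> \<one>) = vS O1"
      unfolding vS_def by (intro restrict_ext) (simp add: r_coset_subset_G[OF Sc kkc[OF O1]])
    have "vS O1 \<in> f O1" unfolding f_def GG_def orb_upd
      by (rule image_eqI[where x="\<one>" and f="\<lambda>g. \<lambda>i\<in>{..<k}. vS O1 i #> g", OF e1[symmetric] subgroup.one_closed[OF Gs]])
    hence "vS O1 \<in> f O2" using fe by simp
    then obtain x where x: "x \<in> Gs" "vS O1 = (\<lambda>i\<in>{..<k}. vS O2 i #> x)"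
      unfolding f_def GG_def orb_upd by blast
    have xc: "x \<in> carrier G" using x Gc by blast
    have Si: "S #> kk O1 i = S #> (kk O2 i \<otimes> x)" if i: "i < k" for i
    proof -
      have "vS O1 i = (\<lambda>i\<in>{..<k}. vS O2 i #> x) i" using x(2) by simp
      thus ?thesis using i coset_mult_assoc[OF Sc kkc[OF O2 i] xc] unfolding vS_def by simp
    qed
    have Hi: "H #> kk O1 i = H #> kk O2 i #> x" if i: "i < k" for i
      using rc_up[OF S H SH kkc[OF O1 i] _ Si[OF i]] coset_mult_assoc[OF Hc kkc[OF O2 i] xc]
        kkc[OF O2 i] xc by simp
    obtain s where s: "s \<in> S" "kk O1 0 = s \<otimes> (kk O2 0 \<otimes> x)"
      using rc_eq[OF S kkc[OF O1 k] _ Si[OF k]] kkc[OF O2 k] xc by auto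
    have sL: "s \<in> Ls" using s SH HL by blast
    have sc: "s \<in> carrier G" using s Sc by blast
    have a0L: "kk O1 0 \<in> Ls" using kkK[OF O1 k] KL by blast
    have b0L: "kk O2 0 \<in> Ls" using kkK[OF O2 k] KL by blast
    have "x = inv (kk O2 0) \<otimes> (kk O2 0 \<otimes> x)" using xc kkc[OF O2 k] by simp
    also have "kk O2 0 \<otimes> x = inv s \<otimes> kk O1 0" using s sc kkc[OF O2 k] xc by simp
    finally have xL: "x \<in> Ls"
      using subgroup.m_closed[OF Ls subgroup.m_inv_closed[OF Ls b0L]
          subgroup.m_closed[OF Ls subgroup.m_inv_closed[OF Ls sL] a0L]] by simp
    have "wL O1 = (\<lambda>i\<in>{..<k}. wL O2 i #> x)"
      unfolding wL_def by (intro restrict_ext) (simp add: Hi)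
    hence "O1 = tuple_orbit GL k (\<lambda>i\<in>{..<k}. wL O2 i #> x)" using wL_orb[OF O1] by simp
    also have "\<dots> = tuple_orbit GL k (wL O2)"
      unfolding GL_def
      by (rule orb_shift[OF Ls xL]) (simp add: wL_def r_coset_subset_G[OF Hc kkc[OF O2]])
    also have "\<dots> = O2" using wL_orb[OF O2] by simp
    finally show "O1 = O2" .
  qed
  have finRG: "finite RG"
  proof -
    have "RG \<subseteq> tuple_orbit GG k ` tuples GG S k" unfolding RG_def by blast
    moreover have "finite (tuples GG S k)"
    proof -
      have "{S #> x | x. x \<in> Gs} = (\<lambda>x. S #> x) ` Gs" by blast
      moreover have "finite Gs" using fin Gc finite_subset by blast
      ultimately have "finite {S #> x | x. x \<in> Gs}" by simp
      thus ?thesis unfolding GG_def tuples_upd by (intro finite_PiE) auto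
    qed
    ultimately show ?thesis using finite_subset by blast
  qed
  have "card RL \<le> card RG"
    by (rule card_inj_on_le[OF inj _ finRG]) (use f_in in blast)
  thus ?thesis unfolding Reg_def RL_def RG_def GL_def GG_def .
qed



lemma (in group) exists_max_solvable:
  assumes fin: "finite (carrier G)" and S: "solvable_subgroup G S"
  shows "\<exists>H. maximal_solvable_subgroup G H \<and> S \<subseteq> H"
proof -
  define C where "C = {K. solvable_subgroup G K \<and> S \<subseteq> K}"
  have Csub: "C \<subseteq> Pow (carrier G)"
    unfolding C_def solvable_subgroup_def using subgroup.subset by blast
  have finC: "finite C" using Csub fin by (meson finite_Pow_iff finite_subset)
  have SC: "S \<in> C" unfolding C_def using S by blast
  have ne: "card ` C \<noteq> {}" using SC by blast
  obtain K0 where K0: "K0 \<in> C" "card K0 = Max (card ` C)"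
    using Max_in[OF finite_imageI[OF finC] ne] by (metis (no_types, lifting) imageE)
  have "maximal_solvable_subgroup G K0"
    unfolding maximal_solvable_subgroup_def
  proof (intro conjI allI impI)
    show "solvable_subgroup G K0" using K0 unfolding C_def by blast
    fix K assume a: "solvable_subgroup G K \<and> K0 \<subseteq> K"
    hence KC: "K \<in> C" using K0 unfolding C_def by blast
    hence "card K \<le> card K0" using K0(2) finC by simp
    moreover have "finite K" using KC Csub fin finite_subset by blast
    ultimately show "K = K0" using a card_subset_eq by (metis antisym card_mono)
  qed
  thus ?thesis using K0 unfolding C_def by blast
qed

theorem mainTheorem8:
  fixes G0 :: "('a, 'b) monoid_scheme"
  assumes "simple_group G0"
    and "finite (carrier G0)"
    and "\<not> comm_group G0"
    and "\<And>H. maximal_solvable_subgroup (AutoGroup G0) H \<Longrightarrow>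
           Reg ((AutoGroup G0)\<lparr>carrier := generate (AutoGroup G0) (H \<union> Inn G0)\<rparr>) H 5 \<ge> 5"
    and "subgroup G (AutoGroup G0)"
    and "Inn G0 \<subseteq> G"
    and "solvable_subgroup ((AutoGroup G0)\<lparr>carrier := G\<rparr>) S"
  shows "Reg ((AutoGroup G0)\<lparr>carrier := G\<rparr>) S 5 \<ge> 5"
proof -
  interpret G0: simple_group G0 by (rule assms(1))
  interpret A: group "AutoGroup G0" by (rule G0.AutoGroup)
  interpret c: group_hom G0 "AutoGroup G0" "conjf G0" by (rule G0.conjf_hom)
  have finA: "finite (carrier (AutoGroup G0))" using G0.finite_auto[OF assms(2)] by (simp add: G0.A_carrier)
  have SG': "subgroup S ((AutoGroup G0)\<lparr>carrier := G\<rparr>)" using assms(7) unfolding solvable_subgroup_def by blast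
  have SA: "subgroup S (AutoGroup G0)" by (rule A.incl_subgroup[OF assms(5) SG'])
  have SG: "S \<subseteq> G" using subgroup.subset[OF SG'] by simp
  have Ssol: "solvable ((AutoGroup G0)\<lparr>carrier := S\<rparr>)" using assms(7) unfolding solvable_subgroup_def by simp
  obtain H where Hm: "maximal_solvable_subgroup (AutoGroup G0) H" and SH: "S \<subseteq> H"
    using A.exists_max_solvable[OF finA] SA Ssol unfolding solvable_subgroup_def by blast
  have Hsub: "subgroup H (AutoGroup G0)" and Hsol: "solvable ((AutoGroup G0)\<lparr>carrier := H\<rparr>)"
    using Hm unfolding maximal_solvable_subgroup_def solvable_subgroup_def by auto
  have InnA: "Inn G0 \<subseteq> carrier (AutoGroup G0)"
    using G0.conjf_auto by (auto simp: G0.Inn_eq G0.A_carrier)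
  have Hc: "H \<subseteq> carrier (AutoGroup G0)" by (rule subgroup.subset[OF Hsub])
  define Ls where "Ls = generate (AutoGroup G0) (H \<union> Inn G0)"
  have Lsub: "subgroup Ls (AutoGroup G0)" unfolding Ls_def
    by (rule A.generate_is_subgroup) (use InnA Hc in blast)
  have HL: "H \<subseteq> Ls" and IL: "Inn G0 \<subseteq> Ls" unfolding Ls_def by (auto intro: generate.incl)
  have Innsub: "subgroup (Inn G0) (AutoGroup G0)" unfolding G0.Inn_eq by (rule c.img_is_subgroup)
  have Innnorm: "Inn G0 \<lhd> AutoGroup G0"
  proof (rule A.normal_invI[OF Innsub])
    fix x h assume x: "x \<in> carrier (AutoGroup G0)" and h: "h \<in> Inn G0"
    obtain g where g: "g \<in> carrier G0" "h = conjf G0 g" using h G0.Inn_eq by blast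
    have xa: "x \<in> auto G0" using x G0.A_carrier by simp
    have "x g \<in> carrier G0" using xa g unfolding auto_def hom_def by blast
    thus "x \<otimes>\<^bsub>AutoGroup G0\<^esub> h \<otimes>\<^bsub>AutoGroup G0\<^esub> inv\<^bsub>AutoGroup G0\<^esub> x \<in> Inn G0"
      using G0.aut_conj[OF xa g(1)] g(2) G0.Inn_eq by simp
  qed
  interpret si: second_isomorphism_grp "Inn G0" "AutoGroup G0" H
    by (intro second_isomorphism_grp.intro second_isomorphism_grp_axioms.intro Innnorm Hsub)
  have HIsub: "subgroup (H <#>\<^bsub>AutoGroup G0\<^esub> Inn G0) (AutoGroup G0)"
    using si.normal_set_mult_subgroup A.commut_normal[OF Hsub Innnorm] by simp
  have "H \<union> Inn G0 \<subseteq> H <#>\<^bsub>AutoGroup G0\<^esub> Inn G0"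
  proof
    fix x assume "x \<in> H \<union> Inn G0"
    thus "x \<in> H <#>\<^bsub>AutoGroup G0\<^esub> Inn G0"
    proof
      assume x: "x \<in> H"
      have "x = x \<otimes>\<^bsub>AutoGroup G0\<^esub> \<one>\<^bsub>AutoGroup G0\<^esub>" using x Hc by auto
      thus ?thesis unfolding set_mult_def using x subgroup.one_closed[OF Innsub] by blast
    next
      assume x: "x \<in> Inn G0"
      have "x = \<one>\<^bsub>AutoGroup G0\<^esub> \<otimes>\<^bsub>AutoGroup G0\<^esub> x" using x InnA by auto
      thus ?thesis unfolding set_mult_def using x subgroup.one_closed[OF Hsub] by blast
    qed
  qed
  hence LHI: "Ls \<subseteq> H <#>\<^bsub>AutoGroup G0\<^esub> Inn G0" unfolding Ls_def
    by (rule A.generate_subgroup_incl[OF _ HIsub])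
  have dec: "\<exists>h\<in>H. \<exists>y\<in>Inn G0. x = h \<otimes>\<^bsub>AutoGroup G0\<^esub> y" if "x \<in> Ls" for x
    using LHI that unfolding set_mult_def by blast
  have core: "core ((AutoGroup G0)\<lparr>carrier := Ls\<rparr>) H \<subseteq> {\<one>\<^bsub>AutoGroup G0\<^esub>}"
    by (rule G0.core_trivial[OF assms(3) Lsub HL Hsub Hsol IL])
  have "Reg ((AutoGroup G0)\<lparr>carrier := Ls\<rparr>) H 5 \<le> Reg ((AutoGroup G0)\<lparr>carrier := G\<rparr>) S 5"
    using A.reg_mono[OF finA assms(5) Lsub SA Hsub SG SH HL assms(6) IL dec core, where k=5] by simp
  moreover have "Reg ((AutoGroup G0)\<lparr>carrier := Ls\<rparr>) H 5 \<ge> 5" unfolding Ls_def by (rule assms(4)[OF Hm])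
  ultimately show ?thesis by linarith
qed


end
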